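(* Let $Z\subset C'\subset P$ be subschemes of the plane $H=\{x=0\}$, where $Z$ is a nonempty zero-dimensional scheme, $I_{C'}=(x,p)$ and $I_P=(x,ph)$ with $p,h\in S$ nonzero homogeneous, $\delta=\deg p$ and $d=2\delta+\deg h$. Let $J\subseteq R$ be a homogeneous ideal admitting the expected residual sequence, i.e. fitting into an exact sequence $$0\to I_{C'}(-1)\xrightarrow{\ \cdot x\ } J\to ph\,I_{Z,H}\to0$$ (equivalently, $(J+xR)/xR=ph\,I_{Z,H}$ and $J:(x)=(x,p)$). Then $J$ is saturated, $J=I_X$ for a one-dimensional closed subscheme $X\subset\mathbb P^3$ of degree $d$ and arithmetic genus $$\binom{d-\delta-1}{2}+\binom{\delta-1}{2}+\delta-\deg Z-1.$$
   Context: $K$ is an algebraically closed field, $R=K[x,y,z,t]$, $S=K[y,z,t]$ identified with $R/xR$, and $H\subset\mathbb P^3_K$ is the plane with ideal $xR$. $I_X$ denotes the saturated homogeneous ideal of a closed subscheme $X$, and $I_{Z,H}\subset S$ is the saturated homogeneous ideal of $Z$ as a subscheme of $H\cong\operatorname{Proj}(S)$. *)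

theory Defs
  imports "HOL-Library.Poly_Mapping" "HOL-Computational_Algebra.Polynomial"
begin

datatype var = VX | VY | VZ | VT

text \<open>Multivariate polynomials over 'k in the variables x,y,z,t:
  finitely supported maps from monomials (exponent vectors) to coefficients.\<close>
type_synonym 'k mpoly = "(var \<Rightarrow>\<^sub>0 nat) \<Rightarrow>\<^sub>0 'k"

definition alg_closed :: "'k::field itself \<Rightarrow> bool" where
  "alg_closed _ \<longleftrightarrow> (\<forall>q :: 'k poly. Polynomial.degree q > 0 \<longrightarrow> (\<exists>a. poly q a = 0))"

definition mdeg :: "(var \<Rightarrow>\<^sub>0 nat) \<Rightarrow> nat" where
  "mdeg m = (\<Sum>v\<in>Poly_Mapping.keys m. Poly_Mapping.lookup m v)"

definition var_poly :: "var \<Rightarrow> 'k::comm_ring_1 mpoly" where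
  "var_poly v = Poly_Mapping.single (Poly_Mapping.single v 1) 1"

definition const_poly :: "'k::comm_ring_1 \<Rightarrow> 'k mpoly" where
  "const_poly c = Poly_Mapping.single 0 c"

definition vars :: "'k::zero mpoly \<Rightarrow> var set" where
  "vars f = \<Union> (Poly_Mapping.keys ` Poly_Mapping.keys f)"

text \<open>Polynomials involving only the variables in V (V = UNIV: the ring R;
  V = {y,z,t}: the ring S = K[y,z,t]).\<close>
definition polys :: "var set \<Rightarrow> 'k::zero mpoly set" where
  "polys V = {f. vars f \<subseteq> V}"

definition homogeneous_of :: "nat \<Rightarrow> 'k::zero mpoly \<Rightarrow> bool" where
  "homogeneous_of n f \<longleftrightarrow> (\<forall>m\<in>Poly_Mapping.keys f. mdeg m = n)"

definition homogeneous :: "'k::zero mpoly \<Rightarrow> bool" where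
  "homogeneous f \<longleftrightarrow> (\<exists>n. homogeneous_of n f)"

definition hcomp :: "nat \<Rightarrow> 'k::zero mpoly \<Rightarrow> 'k mpoly" where
  "hcomp n f = Poly_Mapping.mapp (\<lambda>m c. if mdeg m = n then c else 0) f"

definition is_ideal_in :: "var set \<Rightarrow> 'k::comm_ring_1 mpoly set \<Rightarrow> bool" where
  "is_ideal_in V I \<longleftrightarrow> I \<subseteq> polys V \<and> 0 \<in> I \<and> (\<forall>a\<in>I. \<forall>b\<in>I. a + b \<in> I)
     \<and> (\<forall>a\<in>I. \<forall>r\<in>polys V. r * a \<in> I)"

definition homogeneous_ideal_in :: "var set \<Rightarrow> 'k::comm_ring_1 mpoly set \<Rightarrow> bool" where
  "homogeneous_ideal_in V I \<longleftrightarrow> is_ideal_in V I \<and> (\<forall>f\<in>I. \<forall>n. hcomp n f \<in> I)"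

text \<open>Saturation with respect to the irrelevant ideal generated by the variables in V:
  I : m^\<infinity> = I.\<close>
definition saturated_in :: "var set \<Rightarrow> 'k::comm_ring_1 mpoly set \<Rightarrow> bool" where
  "saturated_in V I \<longleftrightarrow>
     (\<forall>f\<in>polys V. (\<exists>k. \<forall>v\<in>V. var_poly v ^ k * f \<in> I) \<longrightarrow> f \<in> I)"

definition forms :: "var set \<Rightarrow> nat \<Rightarrow> 'k::zero mpoly set" where
  "forms V n = {f \<in> polys V. homogeneous_of n f}"

text \<open>Hilbert function of (K[V]/I) in degree n: the K-dimension of the degree-n part of
  the quotient, i.e. the least size of a set of degree-n forms spanning
  K[V]_n modulo I.\<close>
definition hilbert_fun :: "var set \<Rightarrow> 'k::field mpoly set \<Rightarrow> nat \<Rightarrow> nat" where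
  "hilbert_fun V I n = (LEAST k. \<exists>B. finite B \<and> card B = k \<and> B \<subseteq> forms V n \<and>
      (\<forall>f\<in>forms V n. \<exists>c. f - (\<Sum>b\<in>B. const_poly (c b) * b) \<in> I))"

end

theory Submission
  imports Defs
begin

instantiation var :: linorder
begin
fun var_idx :: "var \<Rightarrow> nat" where
  "var_idx VX = 0" | "var_idx VY = 1" | "var_idx VZ = 2" | "var_idx VT = 3"
definition less_eq_var :: "var \<Rightarrow> var \<Rightarrow> bool" where "less_eq_var a b \<longleftrightarrow> var_idx a \<le> var_idx b"
definition less_var :: "var \<Rightarrow> var \<Rightarrow> bool" where "less_var a b \<longleftrightarrow> var_idx a < var_idx b"
instance
proof
  have inj: "var_idx a = var_idx b \<Longrightarrow> a = b" for a b by (cases a; cases b; simp)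
  fix x y z :: var
  show "(x < y) = (x \<le> y \<and> \<not> y \<le> x)" by (auto simp: less_eq_var_def less_var_def)
  show "x \<le> x" by (simp add: less_eq_var_def)
  show "x \<le> y \<Longrightarrow> y \<le> z \<Longrightarrow> x \<le> z" by (simp add: less_eq_var_def)
  show "x \<le> y \<Longrightarrow> y \<le> x \<Longrightarrow> x = y" using inj by (simp add: less_eq_var_def)
  show "x \<le> y \<or> y \<le> x" by (auto simp add: less_eq_var_def)
qed
end

lemma UNIV_var: "(UNIV :: var set) = {VX, VY, VZ, VT}"
  using var.exhaust by auto

instance var :: finite
  by standard (simp add: UNIV_var)

abbreviation lookup :: "('a \<Rightarrow>\<^sub>0 'b::zero) \<Rightarrow> 'a \<Rightarrow> 'b" where "lookup \<equiv> Poly_Mapping.lookup"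
abbreviation keys :: "('a \<Rightarrow>\<^sub>0 'b::zero) \<Rightarrow> 'a set" where "keys \<equiv> Poly_Mapping.keys"

definition ev :: "var \<Rightarrow> (var \<Rightarrow>\<^sub>0 nat)" where "ev v = Poly_Mapping.single v 1"

lemma lookup_ev: "lookup (ev v) w = (if v = w then 1 else 0)"
  by (simp add: ev_def lookup_single when_def)

lemma var_poly_ev: "var_poly v = Poly_Mapping.single (ev v) 1"
  by (simp add: var_poly_def ev_def)

definition sc :: "'k::field \<Rightarrow> 'k mpoly \<Rightarrow> 'k mpoly" where "sc c f = const_poly c * f"

definition pi :: "var \<Rightarrow> 'k::field mpoly \<Rightarrow> 'k mpoly" where
  "pi v f = Poly_Mapping.mapp (\<lambda>m c. if lookup m v = 0 then c else 0) f"

definition rho :: "var \<Rightarrow> 'k::field mpoly \<Rightarrow> 'k mpoly" where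
  "rho v f = Abs_poly_mapping (\<lambda>m. lookup f (m + ev v))"

lemma lookup_sc [simp]: "lookup (sc c f) m = c * lookup f m"
  unfolding sc_def const_poly_def mult_map_scale_conv_mult[symmetric]
  by (simp add: Poly_Mapping.map.rep_eq when_def)

lemma lookup_const_mult [simp]: "lookup (const_poly c * (f::'k::field mpoly)) m = c * lookup f m"
  using lookup_sc[of c f m] unfolding sc_def .

lemma lookup_pi: "lookup (pi v f) m = (if lookup m v = 0 then lookup f m else 0)"
  unfolding pi_def lookup_mapp by (auto simp: when_def in_keys_iff)

lemma lookup_rho: "lookup (rho v f) m = lookup f (m + ev v)"
proof -
  have "finite ((\<lambda>m. m + ev v) -` {k. lookup f k \<noteq> 0})"
    by (rule finite_vimageI) (auto simp: inj_def)
  then have "finite {m. lookup f (m + ev v) \<noteq> 0}" by (simp add: vimage_def)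
  then show ?thesis unfolding rho_def by simp
qed

lemma lookup_single_mult_add:
  "lookup (Poly_Mapping.single k c * f) (k + q) = c * lookup (f::'k::field mpoly) q"
proof -
  have "lookup (Poly_Mapping.single k c * f) (k + q)
     = (\<Sum>l. (c when k = l) * (\<Sum>r. lookup f r when k + q = l + r))"
    by (simp add: lookup_mult lookup_single)
  also have "\<dots> = (\<Sum>l. (c * (\<Sum>r. lookup f r when k + q = k + r) when k = l))"
    by (rule Sum_any.cong) (auto simp: when_def)
  also have "\<dots> = c * lookup f q"
    by simp
  finally show ?thesis .
qed

lemma lookup_single_mult_not:
  assumes "\<And>q. m \<noteq> k + q"
  shows "lookup (Poly_Mapping.single k c * f) m = (0::'k::field)"
proof -
  have "lookup (Poly_Mapping.single k c * f) m
     = (\<Sum>l. (c when k = l) * (\<Sum>r. lookup f r when m = l + r))"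
    by (simp add: lookup_mult lookup_single)
  also have "(\<lambda>l. (c when k = l) * (\<Sum>r. lookup f r when m = l + r)) = (\<lambda>l. 0)"
  proof (rule ext)
    fix l
    show "(c when k = l) * (\<Sum>r. lookup f r when m = l + r) = 0"
    proof (cases "k = l")
      case True
      have "(\<lambda>r. lookup f r when m = l + r) = (\<lambda>r. 0)"
        by (rule ext) (use assms True in \<open>auto simp: when_def\<close>)
      then show ?thesis by (metis (no_types) Sum_any.neutral mult_zero_right)
    qed (simp add: when_def)
  qed
  finally show ?thesis by simp
qed

lemma ev_split: "lookup m v \<noteq> 0 \<Longrightarrow> m = ev v + (m - ev v)"
  by (rule poly_mapping_eqI) (auto simp: lookup_add lookup_minus lookup_ev)

lemma lookup_X_mult:
  "lookup (var_poly v * f) m = (if lookup m v = 0 then 0 else lookup (f::'k::field mpoly) (m - ev v))"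
proof (cases "lookup m v = 0")
  case True
  have "\<And>q. m \<noteq> ev v + q"
  proof
    fix q assume "m = ev v + q"
    then have "lookup m v = 1 + lookup q v" by (simp add: lookup_add lookup_ev)
    with True show False by simp
  qed
  then show ?thesis using True unfolding var_poly_ev by (simp add: lookup_single_mult_not)
next
  case False
  then have "lookup (var_poly v * f) m = lookup (var_poly v * f) (ev v + (m - ev v))"
    using ev_split by metis
  also have "\<dots> = lookup f (m - ev v)"
    unfolding var_poly_ev by (simp add: lookup_single_mult_add)
  finally show ?thesis using False by simp
qed

lemma lookup_X_mult_add [simp]:
  "lookup (var_poly v * f) (m + ev v) = lookup (f::'k::field mpoly) m"
proof -
  have "lookup (m + ev v) v \<noteq> 0" by (simp add: lookup_add lookup_ev)
  moreover have "m + ev v - ev v = m" by simp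
  ultimately show ?thesis by (simp only: lookup_X_mult if_False)
qed

lemma pi_rho: "f = pi v f + var_poly v * rho v (f::'k::field mpoly)"
proof (rule poly_mapping_eqI)
  fix m
  show "lookup f m = lookup (pi v f + var_poly v * rho v f) m"
  proof (cases "lookup m v = 0")
    case True then show ?thesis by (simp add: lookup_add lookup_pi lookup_X_mult)
  next
    case False
    then have "m - ev v + ev v = m" using ev_split by (metis add.commute)
    then show ?thesis using False by (simp add: lookup_add lookup_pi lookup_X_mult lookup_rho)
  qed
qed

lemma pi_add: "pi v (f + g) = pi v f + pi v g"
  by (rule poly_mapping_eqI) (simp add: lookup_pi lookup_add)
lemma pi_minus: "pi v (f - g) = pi v f - pi v g"
  by (rule poly_mapping_eqI) (simp add: lookup_pi lookup_minus)
lemma pi_sc: "pi v (sc c f) = sc c (pi v f)"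
  by (rule poly_mapping_eqI) (simp add: lookup_pi)
lemma pi_zero [simp]: "pi v 0 = 0"
  by (rule poly_mapping_eqI) (simp add: lookup_pi)
lemma pi_X_mult [simp]: "pi v (var_poly v * f) = 0"
  by (rule poly_mapping_eqI) (simp add: lookup_pi lookup_X_mult)
lemma pi_id: "(\<And>m. lookup f m \<noteq> 0 \<Longrightarrow> lookup m v = 0) \<Longrightarrow> pi v f = f"
  by (rule poly_mapping_eqI) (metis lookup_pi)
lemma pi_pi: "pi v (pi v f) = pi v f"
  by (rule poly_mapping_eqI) (simp add: lookup_pi)

lemma rho_X_mult [simp]: "rho v (var_poly v * f) = (f::'k::field mpoly)"
  by (rule poly_mapping_eqI) (simp only: lookup_rho lookup_X_mult_add)

lemma X_mult_inj: "var_poly v * f = var_poly v * g \<Longrightarrow> (f::'k::field mpoly) = g"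
  by (metis rho_X_mult)

lemma X_nz [simp]: "var_poly v \<noteq> (0::'k::field mpoly)"
  unfolding var_poly_ev by (metis one_neq_zero single_zero inj_single[unfolded inj_def] lookup_single_eq)

definition supp_in :: "((var \<Rightarrow>\<^sub>0 nat) \<Rightarrow> bool) \<Rightarrow> 'k::field mpoly \<Rightarrow> bool" where
  "supp_in P f \<longleftrightarrow> (\<forall>m. lookup f m \<noteq> 0 \<longrightarrow> P m)"

definition inV :: "var set \<Rightarrow> (var \<Rightarrow>\<^sub>0 nat) \<Rightarrow> bool" where
  "inV V m \<longleftrightarrow> (\<forall>w. w \<notin> V \<longrightarrow> lookup m w = 0)"

lemma inV_keys: "inV V m \<longleftrightarrow> keys m \<subseteq> V"
  unfolding inV_def by (auto simp: in_keys_iff)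

lemma polys_iff: "(f::'k::field mpoly) \<in> polys V \<longleftrightarrow> supp_in (inV V) f"
proof -
  have "f \<in> polys V \<longleftrightarrow> (\<forall>m\<in>keys f. keys m \<subseteq> V)"
    unfolding polys_def vars_def by blast
  also have "\<dots> \<longleftrightarrow> supp_in (inV V) f"
    unfolding supp_in_def inV_keys by (simp only: Ball_def in_keys_iff)
  finally show ?thesis .
qed

lemma hom_iff: "homogeneous_of n (f::'k::field mpoly) \<longleftrightarrow> supp_in (\<lambda>m. mdeg m = n) f"
  unfolding homogeneous_of_def supp_in_def by (auto simp: in_keys_iff)

lemma forms_iff: "(f::'k::field mpoly) \<in> forms V n \<longleftrightarrow> supp_in (\<lambda>m. inV V m \<and> mdeg m = n) f"
  unfolding forms_def polys_iff hom_iff supp_in_def by auto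

lemma supp_in_mono: "supp_in P f \<Longrightarrow> (\<And>m. P m \<Longrightarrow> Q m) \<Longrightarrow> supp_in Q f"
  unfolding supp_in_def by auto
lemma supp_in_conj: "supp_in P f \<Longrightarrow> supp_in Q f \<Longrightarrow> supp_in (\<lambda>m. P m \<and> Q m) f"
  unfolding supp_in_def by auto
lemma supp_in_0 [simp]: "supp_in P 0"
  unfolding supp_in_def by simp
lemma supp_in_add: "supp_in P f \<Longrightarrow> supp_in P g \<Longrightarrow> supp_in P (f + g)"
  unfolding supp_in_def lookup_add by (metis add.left_neutral)
lemma supp_in_diff: "supp_in P f \<Longrightarrow> supp_in P (g::'k::field mpoly) \<Longrightarrow> supp_in P (f - g)"
  unfolding supp_in_def lookup_minus by (metis diff_zero diff_self)
lemma supp_in_uminus: "supp_in P f \<Longrightarrow> supp_in P (- f)"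
  unfolding supp_in_def by auto
lemma supp_in_sc: "supp_in P f \<Longrightarrow> supp_in P (sc c f)"
  unfolding supp_in_def by auto
lemma supp_in_const_mult: "supp_in P f \<Longrightarrow> supp_in P (const_poly c * f)"
  unfolding supp_in_def by auto
lemma supp_in_sum: "(\<And>i. i \<in> A \<Longrightarrow> supp_in P (g i)) \<Longrightarrow> supp_in P (sum g A)"
  by (induction A rule: infinite_finite_induct) (auto intro: supp_in_add)
lemma supp_in_mult:
  assumes "supp_in P f" "supp_in Q g"
  shows "supp_in (\<lambda>m. \<exists>a b. m = a + b \<and> P a \<and> Q b) (f * g)"
  unfolding supp_in_def
proof (intro allI impI)
  fix m assume "lookup (f * g) m \<noteq> 0"
  then have "m \<in> keys (f * g)" by (simp add: in_keys_iff)
  then obtain a b where "m = a + b" "a \<in> keys f" "b \<in> keys g" using keys_mult by blast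
  then show "\<exists>a b. m = a + b \<and> P a \<and> Q b" using assms unfolding supp_in_def by (auto simp: in_keys_iff)
qed
lemma supp_in_pi: "supp_in P f \<Longrightarrow> supp_in (\<lambda>m. P m \<and> lookup m v = 0) (pi v f)"
  unfolding supp_in_def by (auto simp: lookup_pi split: if_splits)
lemma supp_in_rho: "supp_in P f \<Longrightarrow> supp_in (\<lambda>m. P (m + ev v)) (rho v f)"
  unfolding supp_in_def by (auto simp: lookup_rho)
lemma supp_in_X_mult: "supp_in P f \<Longrightarrow> supp_in (\<lambda>m. lookup m v \<noteq> 0 \<and> P (m - ev v)) (var_poly v * f)"
  unfolding supp_in_def by (auto simp: lookup_X_mult split: if_splits)

lemma supp_in_single: "c = 0 \<or> P m \<Longrightarrow> supp_in P (Poly_Mapping.single m c)"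
  unfolding supp_in_def by (auto simp: lookup_single when_def)

lemma mdeg_sum: "mdeg m = (\<Sum>v\<in>UNIV. lookup m v)"
  unfolding mdeg_def by (rule sum.mono_neutral_left) (auto simp: in_keys_iff)
lemma mdeg_add [simp]: "mdeg (a + b) = mdeg a + mdeg b"
  unfolding mdeg_sum by (simp add: lookup_add sum.distrib)
lemma mdeg_zero [simp]: "mdeg 0 = 0"
  unfolding mdeg_def by simp
lemma mdeg_ev [simp]: "mdeg (ev v) = 1"
  unfolding mdeg_def ev_def by simp
lemma mdeg_eq_0: "mdeg m = 0 \<longleftrightarrow> m = 0"
proof
  assume "mdeg m = 0"
  then have "\<forall>v. lookup m v = 0" unfolding mdeg_sum by simp
  then show "m = 0" by (intro poly_mapping_eqI) simp
qed simp
lemma mdeg_minus_ev: "lookup m v \<noteq> 0 \<Longrightarrow> mdeg (m - ev v) = mdeg m - 1"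
  by (metis ev_split mdeg_add mdeg_ev add_diff_cancel_left')

lemma mdeg_pos: "lookup m v \<noteq> 0 \<Longrightarrow> mdeg m \<noteq> 0"
  by (metis mdeg_eq_0 lookup_zero)

lemma mdeg_pos': "0 < lookup m v \<Longrightarrow> 0 < mdeg m"
  using mdeg_pos by blast

lemma inV_add: "inV V (a + b) \<longleftrightarrow> inV V a \<and> inV V b"
  unfolding inV_def by (auto simp: lookup_add)
lemma inV_ev: "inV V (ev v) \<longleftrightarrow> v \<in> V"
  unfolding inV_def by (auto simp: lookup_ev)
lemma inV_minus_ev: "v \<in> V \<Longrightarrow> inV V (m - ev v) \<longleftrightarrow> inV V m"
  unfolding inV_def by (auto simp: lookup_minus lookup_ev)

lemma polys_UNIV [simp]: "polys UNIV = UNIV"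
  unfolding polys_def by simp

lemma forms_0 [simp]: "(0::'k::field mpoly) \<in> forms V n" by (simp add: forms_iff)
lemma forms_add: "(f::'k::field mpoly) \<in> forms V n \<Longrightarrow> g \<in> forms V n \<Longrightarrow> f + g \<in> forms V n"
  by (simp add: forms_iff supp_in_add)
lemma forms_diff: "(f::'k::field mpoly) \<in> forms V n \<Longrightarrow> g \<in> forms V n \<Longrightarrow> f - g \<in> forms V n"
  by (simp add: forms_iff supp_in_diff)
lemma forms_sc: "(f::'k::field mpoly) \<in> forms V n \<Longrightarrow> sc c f \<in> forms V n"
  by (simp add: forms_iff supp_in_sc)
lemma forms_const_mult: "(f::'k::field mpoly) \<in> forms V n \<Longrightarrow> const_poly c * f \<in> forms V n"
  by (simp add: forms_iff supp_in_const_mult)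
lemma forms_sum: "(\<And>i. i \<in> A \<Longrightarrow> (g i::'k::field mpoly) \<in> forms V n) \<Longrightarrow> sum g A \<in> forms V n"
  by (simp add: forms_iff supp_in_sum)
lemma forms_polys: "f \<in> forms V n \<Longrightarrow> f \<in> polys V"
  by (simp add: forms_def)
lemma forms_hom: "f \<in> forms V n \<Longrightarrow> homogeneous_of n f"
  by (simp add: forms_def)

lemma polys_add: "(f::'k::field mpoly) \<in> polys V \<Longrightarrow> g \<in> polys V \<Longrightarrow> f + g \<in> polys V"
  by (simp add: polys_iff supp_in_add)
lemma polys_diff: "(f::'k::field mpoly) \<in> polys V \<Longrightarrow> g \<in> polys V \<Longrightarrow> f - g \<in> polys V"
  by (simp add: polys_iff supp_in_diff)
lemma polys_mult: "(f::'k::field mpoly) \<in> polys V \<Longrightarrow> g \<in> polys V \<Longrightarrow> f * g \<in> polys V"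
  unfolding polys_iff by (auto dest: supp_in_mult intro: supp_in_mono simp: inV_add)
lemma polys_power: "(f::'k::field mpoly) \<in> polys V \<Longrightarrow> f ^ k \<in> polys V"
proof (induction k)
  case 0
  have "(1::'k mpoly) = Poly_Mapping.single 0 1" by simp
  then show ?case unfolding polys_iff
    by (metis inV_def lookup_zero power_0 supp_in_single)
next
  case (Suc k) then show ?case by (simp add: polys_mult)
qed
lemma const_polys: "(const_poly c :: 'k::field mpoly) \<in> polys V"
  unfolding polys_iff const_poly_def by (rule supp_in_single) (simp add: inV_def)
lemma var_polys: "v \<in> V \<Longrightarrow> (var_poly v :: 'k::field mpoly) \<in> polys V"
  unfolding polys_iff var_poly_ev by (rule supp_in_single) (simp add: inV_ev)
lemma const_forms: "(const_poly c :: 'k::field mpoly) \<in> forms V 0"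
  unfolding forms_iff const_poly_def by (rule supp_in_single) (simp add: inV_def)

lemma hom_mult: "homogeneous_of a (f::'k::field mpoly) \<Longrightarrow> homogeneous_of b g \<Longrightarrow> homogeneous_of (a + b) (f * g)"
  unfolding hom_iff by (auto dest: supp_in_mult intro: supp_in_mono)
lemma forms_mult: "(f::'k::field mpoly) \<in> forms V a \<Longrightarrow> g \<in> forms V b \<Longrightarrow> f * g \<in> forms V (a + b)"
  unfolding forms_def by (auto simp: polys_mult hom_mult)

lemma X_mult_forms: "v \<in> V \<Longrightarrow> (f::'k::field mpoly) \<in> forms V n \<Longrightarrow> var_poly v * f \<in> forms V (Suc n)"
  unfolding forms_iff
proof -
  assume v: "v \<in> V" and f: "supp_in (\<lambda>m. inV V m \<and> mdeg m = n) f"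
  show "supp_in (\<lambda>m. inV V m \<and> mdeg m = Suc n) (var_poly v * f)"
  proof (rule supp_in_mono[OF supp_in_X_mult[OF f, of v]])
    fix m assume m: "lookup m v \<noteq> 0 \<and> inV V (m - ev v) \<and> mdeg (m - ev v) = n"
    then have "mdeg m \<noteq> 0" using mdeg_pos by blast
    moreover have "mdeg (m - ev v) = mdeg m - 1" using m mdeg_minus_ev by blast
    moreover have "inV V m" using m v inV_minus_ev by blast
    ultimately show "inV V m \<and> mdeg m = Suc n" using m by simp
  qed
qed

lemma pi_forms: "(f::'k::field mpoly) \<in> forms V n \<Longrightarrow> pi v f \<in> forms (V - {v}) n"
  unfolding forms_iff
  by (auto dest!: supp_in_pi[where v = v] elim!: supp_in_mono simp: inV_def)

lemma rho_forms: "(f::'k::field mpoly) \<in> forms V (Suc n) \<Longrightarrow> rho v f \<in> forms V n"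
  unfolding forms_iff
  by (auto dest!: supp_in_rho[where v = v] elim!: supp_in_mono simp: inV_add)

lemma rho_forms_0: "(f::'k::field mpoly) \<in> forms V 0 \<Longrightarrow> rho v f = 0"
  unfolding forms_iff supp_in_def
  by (intro poly_mapping_eqI) (auto simp: lookup_rho)

lemma pi_polys_notin: "(f::'k::field mpoly) \<in> polys V \<Longrightarrow> v \<notin> V \<Longrightarrow> pi v f = f"
  unfolding polys_iff supp_in_def inV_def by (intro pi_id) auto

lemma pi_mult: "pi v ((f::'k::field mpoly) * g) = pi v f * pi v g"
proof -
  have "supp_in (\<lambda>m. lookup m v = 0) (pi v f)" "supp_in (\<lambda>m. lookup m v = 0) (pi v g)"
    by (simp_all add: supp_in_def lookup_pi)
  then have "supp_in (\<lambda>m. lookup m v = 0) (pi v f * pi v g)"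
    by (auto dest: supp_in_mult intro: supp_in_mono simp: lookup_add)
  then have pp: "pi v (pi v f * pi v g) = pi v f * pi v g"
    by (intro pi_id) (simp add: supp_in_def)
  have "f * g = pi v f * pi v g + var_poly v * (rho v f * pi v g + pi v f * rho v g + var_poly v * rho v f * rho v g)"
    by (subst pi_rho[of f v], subst pi_rho[of g v]) (simp add: algebra_simps)
  then have "pi v (f * g) = pi v (pi v f * pi v g) + pi v (var_poly v * (rho v f * pi v g + pi v f * rho v g + var_poly v * rho v f * rho v g))"
    by (metis pi_add)
  then show ?thesis using pp by simp
qed

lemma pi_X_other: "w \<noteq> v \<Longrightarrow> pi v (var_poly w) = (var_poly w :: 'k::field mpoly)"
  by (intro pi_id) (auto simp: var_poly_ev lookup_single when_def lookup_ev split: if_splits)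

lemma pi_power: "pi v ((f::'k::field mpoly) ^ k) = pi v f ^ k"
proof (induction k)
  case 0
  have "pi v (1::'k mpoly) = 1" by (intro pi_id) (simp add: lookup_one when_def split: if_splits)
  then show ?case by simp
qed (simp add: pi_mult)

section \<open>Homogeneous components\<close>

lemma lookup_hcomp: "lookup (hcomp n f) m = (if mdeg m = n then lookup f m else 0)"
  unfolding hcomp_def lookup_mapp by (auto simp: when_def in_keys_iff)

lemma hcomp_add: "hcomp n (f + g) = hcomp n f + hcomp n g"
  by (rule poly_mapping_eqI) (simp add: lookup_hcomp lookup_add)
lemma hcomp_diff: "hcomp n (f - g) = hcomp n f - hcomp n (g::'k::field mpoly)"
  by (rule poly_mapping_eqI) (simp add: lookup_hcomp lookup_minus)
lemma hcomp_sum: "hcomp n (sum g A) = (\<Sum>i\<in>A. hcomp n (g i :: 'k::field mpoly))"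
  by (rule poly_mapping_eqI) (simp add: lookup_hcomp lookup_sum)
lemma hcomp_pi: "hcomp n (pi v f) = pi v (hcomp n (f::'k::field mpoly))"
  by (rule poly_mapping_eqI) (simp add: lookup_hcomp lookup_pi)
lemma hcomp_hom: "homogeneous_of k (f::'k::field mpoly) \<Longrightarrow> hcomp n f = (if k = n then f else 0)"
  unfolding hom_iff supp_in_def by (intro poly_mapping_eqI) (auto simp: lookup_hcomp)
lemma hcomp_forms: "(f::'k::field mpoly) \<in> polys V \<Longrightarrow> hcomp n f \<in> forms V n"
  unfolding forms_iff polys_iff supp_in_def by (auto simp: lookup_hcomp split: if_splits)
lemma hcomp_hom': "homogeneous_of n (hcomp n (f::'k::field mpoly))"
  unfolding hom_iff supp_in_def by (auto simp: lookup_hcomp split: if_splits)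

lemma hcomp_decomp: "(f::'k::field mpoly) = (\<Sum>k\<in>mdeg ` keys f. hcomp k f)"
proof (rule poly_mapping_eqI)
  fix m
  show "lookup f m = lookup (\<Sum>k\<in>mdeg ` keys f. hcomp k f) m"
  proof (cases "m \<in> keys f")
    case True
    then show ?thesis by (simp add: lookup_sum lookup_hcomp)
  next
    case False
    then show ?thesis by (simp add: lookup_sum lookup_hcomp in_keys_iff)
  qed
qed

lemma hcomp_mult:
  assumes h: "homogeneous_of a (h::'k::field mpoly)"
  shows "hcomp n (h * f) = (if a \<le> n then h * hcomp (n - a) f else 0)"
proof -
  let ?D = "mdeg ` keys f"
  have "h * f = (\<Sum>k\<in>?D. h * hcomp k f)"
    by (subst hcomp_decomp) (simp add: sum_distrib_left)
  then have "hcomp n (h * f) = (\<Sum>k\<in>?D. hcomp n (h * hcomp k f))"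
    by (simp add: hcomp_sum)
  also have "\<dots> = (\<Sum>k\<in>?D. if a + k = n then h * hcomp k f else 0)"
    by (rule sum.cong) (auto simp: hcomp_hom[OF hom_mult[OF h hcomp_hom']])
  also have "\<dots> = (if a \<le> n then h * hcomp (n - a) f else 0)"
  proof (cases "a \<le> n")
    case True
    have "(\<Sum>k\<in>?D. if a + k = n then h * hcomp k f else 0) = (\<Sum>k\<in>?D. if k = n - a then h * hcomp k f else 0)"
      by (rule sum.cong) (use True in auto)
    also have "\<dots> = (if n - a \<in> ?D then h * hcomp (n - a) f else 0)"
      by (simp add: sum.delta)
    also have "\<dots> = h * hcomp (n - a) f"
    proof -
      have "n - a \<notin> ?D \<Longrightarrow> hcomp (n - a) f = 0"
        by (rule poly_mapping_eqI) (auto simp: lookup_hcomp, metis image_eqI in_keys_iff)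
      then show ?thesis by auto
    qed
    finally show ?thesis using True by simp
  next
    case False
    then show ?thesis by (simp add: sum.neutral)
  qed
  finally show ?thesis .
qed

lemma const_poly_add: "const_poly (a + b) = const_poly a + (const_poly b :: 'k::field mpoly)"
  by (simp add: const_poly_def single_add)
lemma const_poly_mult: "const_poly a * const_poly b = (const_poly (a * b) :: 'k::field mpoly)"
  by (simp add: const_poly_def mult_single)
lemma const_poly_1: "const_poly 1 = (1 :: 'k::field mpoly)"
  by (simp add: const_poly_def)

interpretation vs: vector_space "sc :: 'k::field \<Rightarrow> 'k mpoly \<Rightarrow> 'k mpoly"
  by unfold_locales
    (simp_all add: sc_def distrib_left distrib_right const_poly_add mult.assoc[symmetric] const_poly_mult const_poly_1)

definition fd :: "'k::field mpoly set \<Rightarrow> bool" where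
  "fd W \<longleftrightarrow> (\<exists>B. finite B \<and> W \<subseteq> vs.span B)"

lemma fd_subset: "fd W \<Longrightarrow> W' \<subseteq> W \<Longrightarrow> fd W'"
  unfolding fd_def by blast

lemma fd_finite_indep: "fd W \<Longrightarrow> B \<subseteq> W \<Longrightarrow> vs.independent B \<Longrightarrow> finite B"
  proof -
  assume "fd W" "B \<subseteq> W" "vs.independent B"
  then obtain T where "finite T" "W \<subseteq> vs.span T" unfolding fd_def by blast
  then show "finite B" using vs.independent_span_bound[of T B] \<open>B \<subseteq> W\<close> \<open>vs.independent B\<close> by blast
qed

lemma module_hom_sc:
  assumes "\<And>x y. f (x + y) = f x + f y" "\<And>c x. f (sc c x) = sc c (f x)"
  shows "module_hom (sc :: 'k::field \<Rightarrow> 'k mpoly \<Rightarrow> 'k mpoly) sc f"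
  unfolding module_hom_iff using assms vs.module_axioms by blast

lemma fd_image:
  assumes "module_hom (sc :: 'k::field \<Rightarrow> 'k mpoly \<Rightarrow> 'k mpoly) sc f" "fd W"
  shows "fd (f ` W)"
proof -
  interpret h: module_hom sc sc f by fact
  obtain B where "finite B" "W \<subseteq> vs.span B" using assms(2) unfolding fd_def by blast
  then show ?thesis unfolding fd_def
    by (metis finite_imageI h.spans_image)
qed

lemma span_disj:
  assumes ind: "vs.independent (B :: 'k::field mpoly set)" and fin: "finite B" and A: "A \<subseteq> B"
    and x1: "x \<in> vs.span A" and x2: "x \<in> vs.span (B - A)"
  shows "x = 0"
proof -
  have fA: "finite A" "finite (B - A)" using fin A finite_subset by auto
  obtain u where u: "x = (\<Sum>v\<in>A. sc (u v) v)" using x1 vs.span_finite[OF fA(1)] by blast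
  obtain w where w: "x = (\<Sum>v\<in>B - A. sc (w v) v)" using x2 vs.span_finite[OF fA(2)] by blast
  define c where "c v = (if v \<in> A then u v else - w v)" for v
  have "(\<Sum>v\<in>B. sc (c v) v) = (\<Sum>v\<in>A. sc (c v) v) + (\<Sum>v\<in>B - A. sc (c v) v)"
    using sum.subset_diff[OF A fin, of "\<lambda>v. sc (c v) v"] by (simp add: add.commute)
  also have "(\<Sum>v\<in>A. sc (c v) v) = x" using u by (simp add: c_def)
  also have "(\<Sum>v\<in>B - A. sc (c v) v) = - x" using w
    by (simp add: c_def sum_negf[symmetric] vs.scale_minus_left)
  finally have "(\<Sum>v\<in>B. sc (c v) v) = 0" by simp
  then have "\<forall>v\<in>B. c v = 0" using vs.independentD[OF ind fin order_refl] by blast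
  then have "\<forall>v\<in>A. u v = 0" using A unfolding c_def by (metis subsetD)
  then show ?thesis using u by simp
qed

lemma rank_nullity:
  assumes hom: "module_hom (sc :: 'k::field \<Rightarrow> 'k mpoly \<Rightarrow> 'k mpoly) sc f"
    and W: "vs.subspace W" and fdW: "fd W"
  shows "vs.dim W = vs.dim (f ` W) + vs.dim {w\<in>W. f w = 0}"
proof -
  interpret h: module_hom sc sc f by fact
  define K where "K = {w\<in>W. f w = 0}"
  have K: "vs.subspace K" unfolding K_def
    using W by (auto simp: vs.subspace_def h.add h.scale)
  obtain BK where BK: "BK \<subseteq> K" "vs.independent BK" "K \<subseteq> vs.span BK" "card BK = vs.dim K"
    using vs.basis_exists by blast
  have "BK \<subseteq> W" using BK(1) K_def by auto
  then obtain B where B: "BK \<subseteq> B" "B \<subseteq> W" "vs.independent B" "W \<subseteq> vs.span B"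
    using vs.maximal_independent_subset_extend[OF _ BK(2)] by metis
  have finB: "finite B" using fd_finite_indep[OF fdW B(2,3)] .
  have cardB: "card B = vs.dim W" using vs.basis_card_eq_dim[OF B(2,4,3)] .
  define C where "C = B - BK"
  have spanB: "vs.span B = W" using B W vs.span_subspace by blast
  have KW: "K \<subseteq> W" unfolding K_def by auto
  have inj: "inj_on f (vs.span C)"
  proof -
    have "vs.span C \<subseteq> W" using B(2) W C_def by (metis Diff_subset vs.span_mono spanB subset_trans)
    have "\<forall>x\<in>vs.span C. f x = 0 \<longrightarrow> x = 0"
    proof (intro ballI impI)
      fix x assume x: "x \<in> vs.span C" "f x = 0"
      then have "x \<in> K" using \<open>vs.span C \<subseteq> W\<close> K_def by auto
      then have "x \<in> vs.span BK" using BK(3) by auto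
      then show "x = 0" using span_disj[OF B(3) finB B(1)] x(1) C_def by blast
    qed
    then show ?thesis using h.inj_on_iff_eq_0[OF vs.subspace_span] by blast
  qed
  have fW: "f ` W = vs.span (f ` C)"
  proof -
    have "f ` W = vs.span (f ` B)" using spanB h.span_image by metis
    also have "f ` B \<subseteq> insert 0 (f ` C)" using BK(1) K_def C_def by auto
    then have "vs.span (f ` B) \<subseteq> vs.span (f ` C)"
      by (metis vs.span_insert_0 vs.span_mono vs.span_span)
    moreover have "vs.span (f ` C) \<subseteq> vs.span (f ` B)" by (intro vs.span_mono) (auto simp: C_def)
    ultimately show ?thesis by (simp add: \<open>f ` W = vs.span (f ` B)\<close>)
  qed
  have indC: "vs.independent C" using B(3) C_def vs.independent_mono by blast
  have "vs.independent (f ` C)" using h.independent_injective_image[OF indC inj] .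
  then have "vs.dim (f ` W) = card (f ` C)" using fW vs.dim_span_eq_card_independent by metis
  also have "\<dots> = card C" using inj by (meson card_image inj_on_subset vs.span_superset)
  also have "\<dots> = card B - card BK" unfolding C_def using finB BK(1) B(1)
    by (meson card_Diff_subset finite_subset)
  finally have "vs.dim (f ` W) = vs.dim W - vs.dim K" using cardB BK(4) by simp
  moreover have "vs.dim K \<le> vs.dim W"
    using BK(4) cardB B(1) finB card_mono by metis
  ultimately show ?thesis unfolding K_def by simp
qed

lemma dim_inj_image:
  assumes hom: "module_hom (sc :: 'k::field \<Rightarrow> 'k mpoly \<Rightarrow> 'k mpoly) sc f"
    and W: "vs.subspace W" and fdW: "fd W" and inj: "\<And>w. w \<in> W \<Longrightarrow> f w = 0 \<Longrightarrow> w = 0"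
  shows "vs.dim (f ` W) = vs.dim W"
proof -
  have "{w\<in>W. f w = 0} \<subseteq> {0}" using inj by auto
  then have "vs.span {w\<in>W. f w = 0} \<subseteq> vs.span {}"
  proof -
    assume "{w\<in>W. f w = 0} \<subseteq> {0}"
    then have "vs.span {w\<in>W. f w = 0} \<subseteq> vs.span {0}" by (rule vs.span_mono)
    then show ?thesis by simp
  qed
  then have "vs.span {w\<in>W. f w = 0} = vs.span {}"
    by (simp add: vs.span_empty vs.span_zero subset_antisym)
  then have "vs.dim {w\<in>W. f w = 0} = 0"
    using vs.dim_eq_card[of "{}" "{w\<in>W. f w = 0}"] vs.independent_empty by simp
  then show ?thesis using rank_nullity[OF hom W fdW] by simp
qed

lemma hilbert_least:
  assumes W: "vs.subspace W" and fdW: "fd W" and U: "vs.subspace (W \<inter> I)"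
  shows "(LEAST k. \<exists>B. finite B \<and> card B = k \<and> B \<subseteq> W \<and>
      (\<forall>f\<in>W. \<exists>c. f - (\<Sum>b\<in>B. const_poly (c b) * b) \<in> I)) = vs.dim W - vs.dim (W \<inter> (I::'k::field mpoly set))"
proof (rule Least_equality)
  obtain BU where BU: "BU \<subseteq> W \<inter> I" "vs.independent BU" "W \<inter> I \<subseteq> vs.span BU" "card BU = vs.dim (W \<inter> I)"
    using vs.basis_exists by blast
  have finBU: "finite BU" using fd_finite_indep[OF fdW _ BU(2)] BU(1) by blast
  have spanBU: "vs.span BU = W \<inter> I" using BU U vs.span_subspace by blast
  {
    have "BU \<subseteq> W" using BU(1) by auto
    then obtain B where B: "BU \<subseteq> B" "B \<subseteq> W" "vs.independent B" "W \<subseteq> vs.span B"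
      using vs.maximal_independent_subset_extend[OF _ BU(2)] by metis
    have finB: "finite B" using fd_finite_indep[OF fdW B(2,3)] .
    have cardB: "card B = vs.dim W" using vs.basis_card_eq_dim[OF B(2,4,3)] .
    define C where "C = B - BU"
    have "finite C" "C \<subseteq> W" using finB B(2) unfolding C_def by auto
    moreover have "card C = vs.dim W - vs.dim (W \<inter> I)"
      unfolding C_def using card_Diff_subset[OF finite_subset[OF B(1) finB] B(1)] cardB BU(4) by simp
    moreover have "\<forall>f\<in>W. \<exists>c. f - (\<Sum>b\<in>C. const_poly (c b) * b) \<in> I"
    proof
      fix f assume "f \<in> W"
      then obtain u where u: "f = (\<Sum>v\<in>B. sc (u v) v)" using B(4) vs.span_finite[OF finB] by blast
      have "f = (\<Sum>v\<in>C. sc (u v) v) + (\<Sum>v\<in>BU. sc (u v) v)"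
        unfolding u C_def using sum.subset_diff[OF B(1) finB, of "\<lambda>v. sc (u v) v"] by simp
      moreover have "(\<Sum>v\<in>BU. sc (u v) v) \<in> I"
        using spanBU vs.span_finite[OF finBU] by blast
      ultimately show "\<exists>c. f - (\<Sum>b\<in>C. const_poly (c b) * b) \<in> I"
        by (intro exI[of _ u]) (simp add: sc_def)
    qed
    ultimately show "\<exists>B. finite B \<and> card B = vs.dim W - vs.dim (W \<inter> I) \<and> B \<subseteq> W \<and>
      (\<forall>f\<in>W. \<exists>c. f - (\<Sum>b\<in>B. const_poly (c b) * b) \<in> I)" by blast
  }
  fix k assume "\<exists>B. finite B \<and> card B = k \<and> B \<subseteq> W \<and>
      (\<forall>f\<in>W. \<exists>c. f - (\<Sum>b\<in>B. const_poly (c b) * b) \<in> I)"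
  then obtain B where B: "finite B" "card B = k" "B \<subseteq> W"
    "\<forall>f\<in>W. \<exists>c. f - (\<Sum>b\<in>B. const_poly (c b) * b) \<in> I" by blast
  have "W \<subseteq> vs.span (B \<union> BU)"
  proof
    fix f assume f: "f \<in> W"
    then obtain c where c: "f - (\<Sum>b\<in>B. const_poly (c b) * b) \<in> I" using B(4) by blast
    have s: "(\<Sum>b\<in>B. const_poly (c b) * b) \<in> W"
    proof (rule vs.subspace_sum[OF W])
      fix b assume "b \<in> B"
      then show "const_poly (c b) * b \<in> W" using vs.subspace_scale[OF W, of b "c b"] B(3) unfolding sc_def by blast
    qed
    have "f - (\<Sum>b\<in>B. const_poly (c b) * b) \<in> W" using f s W vs.subspace_diff by blast
    then have "f - (\<Sum>b\<in>B. const_poly (c b) * b) \<in> vs.span (B \<union> BU)"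
      using c spanBU vs.span_mono[of BU "B \<union> BU"] by blast
    moreover have "(\<Sum>b\<in>B. const_poly (c b) * b) \<in> vs.span (B \<union> BU)"
    proof (intro vs.span_sum)
      fix b assume "b \<in> B"
      then have "b \<in> vs.span (B \<union> BU)" by (intro vs.span_base) simp
      then show "const_poly (c b) * b \<in> vs.span (B \<union> BU)" using vs.span_scale unfolding sc_def by blast
    qed
    ultimately show "f \<in> vs.span (B \<union> BU)" using vs.span_add by fastforce
  qed
  then have "vs.dim W \<le> card (B \<union> BU)" using vs.dim_le_card B(1) finBU by blast
  also have "\<dots> \<le> card B + card BU" by (rule card_Un_le)
  finally show "vs.dim W - vs.dim (W \<inter> I) \<le> k" using B(2) BU(4) by simp
qed

lemma forms_subspace: "vs.subspace (forms V n :: 'k::field mpoly set)"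
  unfolding vs.subspace_def by (auto intro: forms_add forms_sc)

lemma hom_pi: "module_hom (sc :: 'k::field \<Rightarrow> 'k mpoly \<Rightarrow> 'k mpoly) sc (pi v)"
  by (rule module_hom_sc) (simp_all add: pi_add pi_sc)

lemma hom_mult_left: "module_hom (sc :: 'k::field \<Rightarrow> 'k mpoly \<Rightarrow> 'k mpoly) sc (\<lambda>f. g * f)"
  by (rule module_hom_sc) (simp_all add: sc_def algebra_simps)

lemma forms_mono: "V \<subseteq> V' \<Longrightarrow> (f::'k::field mpoly) \<in> forms V n \<Longrightarrow> f \<in> forms V' n"
  unfolding forms_iff by (auto elim!: supp_in_mono simp: inV_def)

lemma pi_image_forms: "pi v ` forms V n = (forms (V - {v}) n :: 'k::field mpoly set)"
proof
  show "pi v ` forms V n \<subseteq> (forms (V - {v}) n :: 'k mpoly set)" using pi_forms by blast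
  show "(forms (V - {v}) n :: 'k mpoly set) \<subseteq> pi v ` forms V n"
  proof
    fix g :: "'k mpoly" assume g: "g \<in> forms (V - {v}) n"
    then have "pi v g = g" using pi_polys_notin[OF forms_polys[OF g]] by simp
    moreover have "g \<in> forms V n" using forms_mono[OF _ g] by blast
    ultimately show "g \<in> pi v ` forms V n" by (metis image_eqI)
  qed
qed

lemma pi_kernel_forms:
  assumes "v \<in> V"
  shows "{f \<in> forms V (Suc n). pi v f = 0} = (\<lambda>f. var_poly v * f) ` (forms V n :: 'k::field mpoly set)"
proof
  show "{f \<in> forms V (Suc n). pi v f = 0} \<subseteq> (\<lambda>f. var_poly v * f) ` (forms V n :: 'k mpoly set)"
  proof
    fix f :: "'k mpoly" assume "f \<in> {f \<in> forms V (Suc n). pi v f = 0}"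
    then have f: "f \<in> forms V (Suc n)" "pi v f = 0" by auto
    then have "f = var_poly v * rho v f" using pi_rho[of f v] by simp
    then show "f \<in> (\<lambda>f. var_poly v * f) ` forms V n" using rho_forms[OF f(1)] by blast
  qed
  show "(\<lambda>f. var_poly v * f) ` (forms V n :: 'k mpoly set) \<subseteq> {f \<in> forms V (Suc n). pi v f = 0}"
    using X_mult_forms[OF assms] by auto
qed

lemma pi_kernel_forms_0:
  "{f \<in> forms V 0. pi v f = 0} = {0 :: 'k::field mpoly}"
proof -
  have "f = 0" if "f \<in> forms V 0" "pi v f = 0" for f :: "'k mpoly"
    using pi_rho[of f v] rho_forms_0[OF that(1)] that(2) by simp
  then show ?thesis by auto
qed

lemma forms_0_span: "forms V 0 = vs.span {1 :: 'k::field mpoly}"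
proof -
  have "vs.span {1 :: 'k mpoly} = range (\<lambda>c. sc c 1)" by (simp add: vs.span_singleton)
  also have "\<dots> = forms V 0"
  proof
    show "range (\<lambda>c. sc c (1::'k mpoly)) \<subseteq> forms V 0"
      using const_forms by (auto simp: sc_def)
    show "forms V 0 \<subseteq> range (\<lambda>c. sc c (1::'k mpoly))"
    proof
      fix f :: "'k mpoly" assume "f \<in> forms V 0"
      then have "\<forall>m. lookup f m \<noteq> 0 \<longrightarrow> m = 0" unfolding forms_iff supp_in_def by (auto simp: mdeg_eq_0)
      then have "f = sc (lookup f 0) 1"
        by (intro poly_mapping_eqI) (auto simp: lookup_one when_def)
      then show "f \<in> range (\<lambda>c. sc c 1)" by blast
    qed
  qed
  finally show ?thesis by simp
qed

lemma forms_empty_Suc: "forms {} (Suc n) = {0 :: 'k::field mpoly}"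
proof -
  have "f = 0" if "f \<in> forms {} (Suc n)" for f :: "'k mpoly"
  proof (rule poly_mapping_eqI)
    fix m
    have "inV {} m \<Longrightarrow> m = 0" unfolding inV_def by (intro poly_mapping_eqI) simp
    then show "lookup f m = lookup 0 m" using that unfolding forms_iff supp_in_def by fastforce
  qed
  then show ?thesis by auto
qed

lemma fd_sum:
  assumes "fd A" "fd B" "W \<subseteq> {a + b | a b. a \<in> A \<and> b \<in> B}"
  shows "fd (W :: 'k::field mpoly set)"
proof -
  obtain SA SB where "finite SA" "A \<subseteq> vs.span SA" "finite SB" "B \<subseteq> vs.span SB"
    using assms unfolding fd_def by blast
  have "W \<subseteq> vs.span (SA \<union> SB)"
  proof
    fix w assume "w \<in> W"
    then obtain a b where ab: "w = a + b" "a \<in> A" "b \<in> B" using assms(3) by blast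
    have "a \<in> vs.span (SA \<union> SB)" using ab(2) \<open>A \<subseteq> vs.span SA\<close> vs.span_mono[of SA "SA \<union> SB"] by blast
    moreover have "b \<in> vs.span (SA \<union> SB)" using ab(3) \<open>B \<subseteq> vs.span SB\<close> vs.span_mono[of SB "SA \<union> SB"] by blast
    ultimately show "w \<in> vs.span (SA \<union> SB)" using ab(1) vs.span_add by blast
  qed
  then show ?thesis unfolding fd_def using \<open>finite SA\<close> \<open>finite SB\<close> by blast
qed

lemma fd_forms_0: "fd (forms V 0 :: 'k::field mpoly set)"
  unfolding fd_def forms_0_span by blast

lemma fd_forms: "fd (forms V n :: 'k::field mpoly set)"
proof -
  have "finite V" by simp
  then show ?thesis
  proof (induction V arbitrary: n rule: finite_induct)
    case empty
    then show ?case using fd_forms_0[of "{}", where 'k='k] by (cases n) (auto simp: forms_empty_Suc fd_def)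
  next
    case (insert v V)
    show ?case
    proof (induction n)
      case 0 then show ?case by (rule fd_forms_0)
    next
      case (Suc n)
      have "(forms (insert v V) (Suc n) :: 'k mpoly set) \<subseteq> {a + b | a b. a \<in> forms V (Suc n) \<and> b \<in> (\<lambda>f. var_poly v * f) ` forms (insert v V) n}"
      proof
        fix f :: "'k mpoly" assume f: "f \<in> forms (insert v V) (Suc n)"
        have "pi v f \<in> forms V (Suc n)" using pi_forms[OF f, of v] insert.hyps(2) by simp
        moreover have "rho v f \<in> forms (insert v V) n" by (rule rho_forms[OF f])
        ultimately show "f \<in> {a + b | a b. a \<in> forms V (Suc n) \<and> b \<in> (\<lambda>f. var_poly v * f) ` forms (insert v V) n}"
          using pi_rho[of f v] by blast
      qed
      then show ?case by (rule fd_sum[OF insert.IH fd_image[OF hom_mult_left Suc.IH]])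
    qed
  qed
qed

lemma dim_forms_0: "vs.dim (forms V 0 :: 'k::field mpoly set) = 1"
  unfolding forms_0_span vs.dim_span by (simp add: vs.dim_eq_card_independent)

lemma dim_forms_empty_Suc: "vs.dim (forms {} (Suc n) :: 'k::field mpoly set) = 0"
  unfolding forms_empty_Suc by (metis vs.dim_span vs.span_insert_0 vs.dim_eq_card_independent
      vs.independent_empty card.empty vs.span_empty)

lemma dim_forms_rec:
  assumes "v \<in> V"
  shows "vs.dim (forms V (Suc n) :: 'k::field mpoly set) = vs.dim (forms (V - {v}) (Suc n) :: 'k mpoly set) + vs.dim (forms V n :: 'k mpoly set)"
proof -
  have "vs.dim (forms V (Suc n) :: 'k mpoly set) = vs.dim (pi v ` forms V (Suc n) :: 'k mpoly set) + vs.dim {f \<in> forms V (Suc n) :: 'k mpoly set. pi v f = 0}"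
    by (rule rank_nullity[OF hom_pi forms_subspace fd_forms])
  also have "pi v ` forms V (Suc n) = (forms (V - {v}) (Suc n) :: 'k mpoly set)" by (rule pi_image_forms)
  also have "{f \<in> forms V (Suc n) :: 'k mpoly set. pi v f = 0} = (\<lambda>f. var_poly v * f) ` forms V n"
    by (rule pi_kernel_forms[OF assms])
  also have "vs.dim ((\<lambda>f. var_poly v * f) ` (forms V n :: 'k mpoly set)) = vs.dim (forms V n :: 'k mpoly set)"
    by (rule dim_inj_image[OF hom_mult_left forms_subspace fd_forms]) (simp add: X_nz)
  finally show ?thesis .
qed

lemma dim_forms_1: "vs.dim (forms {VY} n :: 'k::field mpoly set) = 1"
proof (induction n)
  case 0 then show ?case by (rule dim_forms_0)
next
  case (Suc n)
  then show ?case using dim_forms_rec[of VY "{VY}" n, where 'k='k] by (simp add: dim_forms_empty_Suc)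
qed

lemma dim_forms_2: "vs.dim (forms {VY, VZ} n :: 'k::field mpoly set) = n + 1"
proof (induction n)
  case 0 then show ?case by (simp add: dim_forms_0)
next
  case (Suc n)
  have "{VY, VZ} - {VZ} = {VY}" by auto
  then show ?case using dim_forms_rec[of VZ "{VY, VZ}" n, where 'k='k] Suc dim_forms_1[where 'k='k] by simp
qed

lemma dim_forms_3: "2 * vs.dim (forms {VY, VZ, VT} n :: 'k::field mpoly set) = (n + 1) * (n + 2)"
proof (induction n)
  case 0 then show ?case by (simp add: dim_forms_0)
next
  case (Suc n)
  have "{VY, VZ, VT} - {VT} = {VY, VZ}" by auto
  then show ?case using dim_forms_rec[of VT "{VY, VZ, VT}" n, where 'k='k] Suc dim_forms_2[of "Suc n", where 'k='k] by simp
qed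

lemma ideal_mult: "is_ideal_in V I \<Longrightarrow> a \<in> I \<Longrightarrow> r \<in> polys V \<Longrightarrow> r * a \<in> I"
  unfolding is_ideal_in_def by blast

lemma ideal_subspace: "is_ideal_in V (I :: 'k::field mpoly set) \<Longrightarrow> vs.subspace I"
  unfolding vs.subspace_def is_ideal_in_def sc_def using const_polys by blast

lemma subspace_Int: "vs.subspace A \<Longrightarrow> vs.subspace B \<Longrightarrow> vs.subspace (A \<inter> (B :: 'k::field mpoly set))"
  unfolding vs.subspace_def by blast

lemma dim_mono_fd: "fd W \<Longrightarrow> V \<subseteq> W \<Longrightarrow> vs.dim V \<le> vs.dim (W :: 'k::field mpoly set)"
proof -
  assume "fd W" "V \<subseteq> W"
  obtain B where B: "B \<subseteq> W" "vs.independent B" "W \<subseteq> vs.span B" "card B = vs.dim W"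
    using vs.basis_exists by blast
  have "finite B" using fd_finite_indep[OF \<open>fd W\<close> B(1,2)] .
  then show ?thesis using vs.dim_le_card[of V B] B \<open>V \<subseteq> W\<close> by auto
qed

lemma hilbert_fun_dim:
  assumes "is_ideal_in V (I :: 'k::field mpoly set)"
  shows "int (hilbert_fun V I n) = int (vs.dim (forms V n :: 'k mpoly set)) - int (vs.dim (forms V n \<inter> I))"
proof -
  have "hilbert_fun V I n = vs.dim (forms V n :: 'k mpoly set) - vs.dim (forms V n \<inter> I)"
    unfolding hilbert_fun_def
    by (rule hilbert_least[OF forms_subspace fd_forms subspace_Int[OF forms_subspace ideal_subspace[OF assms]]])
  moreover have "vs.dim (forms V n \<inter> I) \<le> vs.dim (forms V n :: 'k mpoly set)"
    by (rule dim_mono_fd[OF fd_forms]) auto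
  ultimately show ?thesis by simp
qed

lemma pi_polys: "pi v (f :: 'k::field mpoly) \<in> polys (UNIV - {v})"
  unfolding polys_iff using supp_in_pi[of "\<lambda>_. True" f v]
  by (auto elim!: supp_in_mono simp: inV_def supp_in_def)

lemma pi_X_self [simp]: "pi v (var_poly v :: 'k::field mpoly) = 0"
  using pi_X_mult[of v "1::'k mpoly"] by simp

lemma UNIV_minus_VX: "UNIV - {VX} = {VY, VZ, VT}"
  using UNIV_var by auto

lemma cancel_left: "(c :: 'k::field mpoly) \<noteq> 0 \<Longrightarrow> c * a = c * b \<Longrightarrow> a = b"
  by simp

locale resid =
  fixes IZ J :: "'k::field mpoly set" and p h :: "'k mpoly" and \<delta> dh :: nat
  assumes IZ_hom: "homogeneous_ideal_in {VY, VZ, VT} IZ"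
    and IZ_sat: "saturated_in {VY, VZ, VT} IZ"
    and p_S: "p \<in> polys {VY, VZ, VT}" and h_S: "h \<in> polys {VY, VZ, VT}"
    and p_nz: "p \<noteq> 0" and h_nz: "h \<noteq> 0"
    and p_hom: "homogeneous_of \<delta> p" and h_hom: "homogeneous_of dh h"
    and Z_C: "p \<in> IZ"
    and J_hom: "homogeneous_ideal_in UNIV J"
    and J_res: "{g \<in> polys {VY, VZ, VT}. \<exists>j\<in>J. \<exists>r. j = g + var_poly VX * r}
                  = {p * h * f | f. f \<in> IZ}"
    and J_col: "{f. var_poly VX * f \<in> J} = {var_poly VX * a + p * b | a b. True}"
begin

abbreviation "S \<equiv> {VY, VZ, VT}"
abbreviation F :: "var set \<Rightarrow> nat \<Rightarrow> 'k mpoly set" where "F V n \<equiv> forms V n"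
abbreviation dm :: "'k mpoly set \<Rightarrow> nat" where "dm W \<equiv> vs.dim W"
abbreviation x :: "'k mpoly" where "x \<equiv> var_poly VX"
definition A where "A = {p * h * f | f. f \<in> IZ}"
definition Q where "Q = {x * a + p * b | a b. True}"
definition P' where "P' = {p * b | b. b \<in> polys S}"

lemma IZ_ideal: "is_ideal_in S IZ" using IZ_hom unfolding homogeneous_ideal_in_def by blast
lemma J_ideal: "is_ideal_in UNIV J" using J_hom unfolding homogeneous_ideal_in_def by blast
lemma IZ_S: "IZ \<subseteq> polys S" using IZ_ideal unfolding is_ideal_in_def by blast

lemma Q_subspace: "vs.subspace Q"
  unfolding vs.subspace_def Q_def sc_def
proof (intro conjI ballI allI)
  show "0 \<in> {x * a + p * b |a b. True}" by (rule CollectI, rule exI[of _ 0], rule exI[of _ 0]) simp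
next
  fix u v assume "u \<in> {x * a + p * b |a b. True}" "v \<in> {x * a + p * b |a b. True}"
  then obtain a b a' b' where "u = x * a + p * b" "v = x * a' + p * b'" by blast
  then have "u + v = x * (a + a') + p * (b + b')" by (simp add: algebra_simps)
  then show "u + v \<in> {x * a + p * b |a b. True}" by blast
next
  fix c u assume "u \<in> {x * a + p * b |a b. True}"
  then obtain a b where "u = x * a + p * b" by blast
  then have "const_poly c * u = x * (const_poly c * a) + p * (const_poly c * b)" by (simp add: algebra_simps)
  then show "const_poly c * u \<in> {x * a + p * b |a b. True}" by blast
qed

lemma p_forms: "p \<in> F S \<delta>" using p_S p_hom unfolding forms_def by simp
lemma h_forms: "h \<in> F S dh" using h_S h_hom unfolding forms_def by simp

lemma pi_S: "f \<in> polys S \<Longrightarrow> pi VX f = f"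
  by (rule pi_polys_notin) auto

lemma pi_S_forms: "f \<in> F S n \<Longrightarrow> pi VX f = f"
  using pi_S forms_polys by blast

lemma J_decomp: "j \<in> J \<Longrightarrow> pi VX j \<in> A"
proof -
  assume j: "j \<in> J"
  have "pi VX j \<in> polys S" using pi_polys[of VX j] UNIV_minus_VX by simp
  moreover have "j = pi VX j + x * rho VX j" by (rule pi_rho)
  ultimately show ?thesis using j J_res unfolding A_def by blast
qed

lemma M1: "pi VX ` (F UNIV n \<inter> J) = F S n \<inter> A"
proof
  show "pi VX ` (F UNIV n \<inter> J) \<subseteq> F S n \<inter> A"
    using pi_forms[of _ UNIV n VX] UNIV_minus_VX J_decomp by auto
  show "F S n \<inter> A \<subseteq> pi VX ` (F UNIV n \<inter> J)"
  proof
    fix g assume g: "g \<in> F S n \<inter> A"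
    then have "g \<in> polys S" using forms_polys by blast
    then obtain j r where j: "j \<in> J" "j = g + x * r" using g J_res unfolding A_def by blast
    have "hcomp n j \<in> J" using J_hom j(1) unfolding homogeneous_ideal_in_def by blast
    moreover have "hcomp n j \<in> F UNIV n" by (rule hcomp_forms) simp
    moreover have "pi VX (hcomp n j) = g"
    proof -
      have "pi VX j = g" using j(2) pi_S_forms[of g n] g by (simp add: pi_add)
      then have "pi VX (hcomp n j) = hcomp n g" using hcomp_pi[of n VX j] by simp
      also have "\<dots> = g" using hcomp_hom[OF forms_hom[of g S n], of n] g by simp
      finally show ?thesis .
    qed
    ultimately show "g \<in> pi VX ` (F UNIV n \<inter> J)" by (metis IntI image_eqI)
  qed
qed

lemma M2: "{j \<in> F UNIV (Suc n) \<inter> J. pi VX j = 0} = (\<lambda>f. x * f) ` (F UNIV n \<inter> Q)"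
proof
  show "{j \<in> F UNIV (Suc n) \<inter> J. pi VX j = 0} \<subseteq> (\<lambda>f. x * f) ` (F UNIV n \<inter> Q)"
  proof
    fix j assume "j \<in> {j \<in> F UNIV (Suc n) \<inter> J. pi VX j = 0}"
    then have j: "j \<in> F UNIV (Suc n)" "j \<in> J" "pi VX j = 0" by auto
    then have jj: "j = x * rho VX j" using pi_rho[of j VX] by simp
    then have "rho VX j \<in> Q" using j(2) J_col unfolding Q_def by (metis (mono_tags, lifting) mem_Collect_eq)
    moreover have "rho VX j \<in> F UNIV n" by (rule rho_forms[OF j(1)])
    ultimately show "j \<in> (\<lambda>f. x * f) ` (F UNIV n \<inter> Q)" using jj by blast
  qed
  show "(\<lambda>f. x * f) ` (F UNIV n \<inter> Q) \<subseteq> {j \<in> F UNIV (Suc n) \<inter> J. pi VX j = 0}"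
  proof
    fix j assume "j \<in> (\<lambda>f. x * f) ` (F UNIV n \<inter> Q)"
    then obtain q where q: "q \<in> F UNIV n" "q \<in> Q" "j = x * q" by blast
    have "j \<in> J" using q(2,3) J_col unfolding Q_def by blast
    moreover have "j \<in> F UNIV (Suc n)" using X_mult_forms[OF _ q(1)] q(3) by simp
    ultimately show "j \<in> {j \<in> F UNIV (Suc n) \<inter> J. pi VX j = 0}" using q(3) by simp
  qed
qed

lemma M3: "int (dm (F UNIV (Suc n) \<inter> J)) = int (dm (F S (Suc n) \<inter> A)) + int (dm (F UNIV n \<inter> Q))"
proof -
  have W: "vs.subspace (F UNIV (Suc n) \<inter> J)"
    by (rule subspace_Int[OF forms_subspace ideal_subspace[OF J_ideal]])
  have fdW: "fd (F UNIV (Suc n) \<inter> J)" by (rule fd_subset[OF fd_forms]) auto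
  have "dm (F UNIV (Suc n) \<inter> J) = dm (pi VX ` (F UNIV (Suc n) \<inter> J)) + dm {j \<in> F UNIV (Suc n) \<inter> J. pi VX j = 0}"
    by (rule rank_nullity[OF hom_pi W fdW])
  also have "pi VX ` (F UNIV (Suc n) \<inter> J) = F S (Suc n) \<inter> A" by (rule M1)
  also have "{j \<in> F UNIV (Suc n) \<inter> J. pi VX j = 0} = (\<lambda>f. x * f) ` (F UNIV n \<inter> Q)" by (rule M2)
  also have "dm ((\<lambda>f. x * f) ` (F UNIV n \<inter> Q)) = dm (F UNIV n \<inter> Q)"
    by (rule dim_inj_image[OF hom_mult_left subspace_Int[OF forms_subspace Q_subspace] fd_subset[OF fd_forms]])
       auto
  finally show ?thesis by simp
qed

lemma M4: "pi VX ` (F UNIV (Suc m) \<inter> Q) = F S (Suc m) \<inter> P'"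
proof
  show "pi VX ` (F UNIV (Suc m) \<inter> Q) \<subseteq> F S (Suc m) \<inter> P'"
  proof
    fix g assume "g \<in> pi VX ` (F UNIV (Suc m) \<inter> Q)"
    then obtain q a b where q: "q \<in> F UNIV (Suc m)" "q = x * a + p * b" "g = pi VX q"
      unfolding Q_def by blast
    have "g = p * pi VX b" using q(2,3) pi_S[OF p_S] by (simp add: pi_add pi_mult)
    moreover have "pi VX b \<in> polys S" using pi_polys[of VX b] UNIV_minus_VX by simp
    moreover have "g \<in> F S (Suc m)" using pi_forms[OF q(1), of VX] q(3) UNIV_minus_VX by simp
    ultimately show "g \<in> F S (Suc m) \<inter> P'" unfolding P'_def by blast
  qed
  show "F S (Suc m) \<inter> P' \<subseteq> pi VX ` (F UNIV (Suc m) \<inter> Q)"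
  proof
    fix g assume g: "g \<in> F S (Suc m) \<inter> P'"
    then obtain b where b: "g = p * b" unfolding P'_def by blast
    then have "g = x * 0 + p * b" by simp
    then have "g \<in> Q" unfolding Q_def by blast
    moreover have "g \<in> F UNIV (Suc m)" using g forms_mono[of S UNIV] by blast
    moreover have "pi VX g = g" using g pi_S_forms by blast
    ultimately show "g \<in> pi VX ` (F UNIV (Suc m) \<inter> Q)" by (metis IntI image_eqI)
  qed
qed

lemma M5: "{q \<in> F UNIV (Suc m) \<inter> Q. pi VX q = 0} = (\<lambda>f. x * f) ` F UNIV m"
proof
  show "{q \<in> F UNIV (Suc m) \<inter> Q. pi VX q = 0} \<subseteq> (\<lambda>f. x * f) ` F UNIV m"
    using pi_kernel_forms[of VX UNIV m] by blast
  show "(\<lambda>f. x * f) ` F UNIV m \<subseteq> {q \<in> F UNIV (Suc m) \<inter> Q. pi VX q = 0}"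
  proof
    fix q assume "q \<in> (\<lambda>f. x * f) ` F UNIV m"
    then obtain f where f: "f \<in> F UNIV m" "q = x * f" by blast
    then have "q = x * f + p * 0" by simp
    then have "q \<in> Q" unfolding Q_def by blast
    then show "q \<in> {q \<in> F UNIV (Suc m) \<inter> Q. pi VX q = 0}"
      using X_mult_forms[OF _ f(1)] f(2) by simp
  qed
qed

lemma M45: "int (dm (F UNIV (Suc m) \<inter> Q)) = int (dm (F S (Suc m) \<inter> P')) + int (dm (F UNIV m))"
proof -
  have W: "vs.subspace (F UNIV (Suc m) \<inter> Q)"
    by (rule subspace_Int[OF forms_subspace Q_subspace])
  have fdW: "fd (F UNIV (Suc m) \<inter> Q)" by (rule fd_subset[OF fd_forms]) auto
  have "dm (F UNIV (Suc m) \<inter> Q) = dm (pi VX ` (F UNIV (Suc m) \<inter> Q)) + dm {q \<in> F UNIV (Suc m) \<inter> Q. pi VX q = 0}"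
    by (rule rank_nullity[OF hom_pi W fdW])
  also have "pi VX ` (F UNIV (Suc m) \<inter> Q) = F S (Suc m) \<inter> P'" by (rule M4)
  also have "{q \<in> F UNIV (Suc m) \<inter> Q. pi VX q = 0} = (\<lambda>f. x * f) ` F UNIV m" by (rule M5)
  also have "dm ((\<lambda>f. x * f) ` F UNIV m) = dm (F UNIV m)"
    by (rule dim_inj_image[OF hom_mult_left forms_subspace fd_forms]) auto
  finally show ?thesis by simp
qed

lemma M6: "\<delta> \<le> k \<Longrightarrow> F S k \<inter> P' = (\<lambda>b. p * b) ` F S (k - \<delta>)"
proof
  assume k: "\<delta> \<le> k"
  show "F S k \<inter> P' \<subseteq> (\<lambda>b. p * b) ` F S (k - \<delta>)"
  proof
    fix g assume g: "g \<in> F S k \<inter> P'"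
    then obtain b where b: "g = p * b" "b \<in> polys S" unfolding P'_def by blast
    have "p * b = hcomp k (p * b)" using hcomp_hom[OF forms_hom[of g S k], of k] g b by simp
    also have "\<dots> = p * hcomp (k - \<delta>) b" using hcomp_mult[OF p_hom] k by simp
    finally have "b = hcomp (k - \<delta>) b" using p_nz by simp
    then have "b \<in> F S (k - \<delta>)" using hcomp_forms[OF b(2)] by metis
    then show "g \<in> (\<lambda>b. p * b) ` F S (k - \<delta>)" using b by blast
  qed
  show "(\<lambda>b. p * b) ` F S (k - \<delta>) \<subseteq> F S k \<inter> P'"
  proof
    fix g assume "g \<in> (\<lambda>b. p * b) ` F S (k - \<delta>)"
    then obtain b where b: "b \<in> F S (k - \<delta>)" "g = p * b" by blast
    have "g \<in> F S (\<delta> + (k - \<delta>))" using forms_mult[OF p_forms b(1)] b(2) by simp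
    then have "g \<in> F S k" using k by simp
    moreover have "g \<in> P'" unfolding P'_def using b forms_polys by blast
    ultimately show "g \<in> F S k \<inter> P'" by blast
  qed
qed

lemma M6d: "\<delta> \<le> k \<Longrightarrow> dm (F S k \<inter> P') = dm (F S (k - \<delta>))"
  using M6 dim_inj_image[OF hom_mult_left[of p] forms_subspace[of S "k - \<delta>"] fd_forms[of S "k - \<delta>"]] p_nz by simp

lemma ph_forms: "p * h \<in> F S (\<delta> + dh)" by (rule forms_mult[OF p_forms h_forms])

lemma M7: "\<delta> + dh \<le> k \<Longrightarrow> F S k \<inter> A = (\<lambda>f. (p * h) * f) ` (F S (k - (\<delta> + dh)) \<inter> IZ)"
proof
  assume k: "\<delta> + dh \<le> k"
  have phh: "homogeneous_of (\<delta> + dh) (p * h)" using ph_forms forms_hom by blast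
  have phnz: "p * h \<noteq> 0" using p_nz h_nz by simp
  show "F S k \<inter> A \<subseteq> (\<lambda>f. (p * h) * f) ` (F S (k - (\<delta> + dh)) \<inter> IZ)"
  proof
    fix g assume g: "g \<in> F S k \<inter> A"
    then obtain f where f: "g = p * h * f" "f \<in> IZ" unfolding A_def by blast
    have "p * h * f = hcomp k (p * h * f)" using hcomp_hom[OF forms_hom[of g S k], of k] g f by simp
    also have "\<dots> = p * h * hcomp (k - (\<delta> + dh)) f" using hcomp_mult[OF phh] k by simp
    finally have ff: "f = hcomp (k - (\<delta> + dh)) f" using phnz by simp
    then have "f \<in> F S (k - (\<delta> + dh))" using hcomp_forms[of f S] f(2) IZ_S by (metis subsetD)
    then show "g \<in> (\<lambda>f. (p * h) * f) ` (F S (k - (\<delta> + dh)) \<inter> IZ)" using f by blast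
  qed
  show "(\<lambda>f. (p * h) * f) ` (F S (k - (\<delta> + dh)) \<inter> IZ) \<subseteq> F S k \<inter> A"
    using forms_mult[OF ph_forms] k unfolding A_def by fastforce
qed

lemma M7d: "\<delta> + dh \<le> k \<Longrightarrow> dm (F S k \<inter> A) = dm (F S (k - (\<delta> + dh)) \<inter> IZ)"
  using M7 dim_inj_image[OF hom_mult_left[of "p * h"] subspace_Int[OF forms_subspace[of S "k - (\<delta> + dh)"] ideal_subspace[OF IZ_ideal]]
      fd_subset[OF fd_forms[of S "k - (\<delta> + dh)"]]] p_nz h_nz by auto

lemma M8: "dm (F UNIV (Suc n)) = dm (F S (Suc n)) + dm (F UNIV n)"
  using dim_forms_rec[of VX UNIV n] UNIV_minus_VX by simp

end

lemma two_choose: "2 * (j choose 2) = j * (j - 1)"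
proof (induction j)
  case 0 then show ?case by simp
next
  case (Suc j)
  have "(Suc j choose 2) = (j choose 1) + (j choose 2)"
    by (metis Suc_1 binomial_Suc_Suc)
  then show ?case using Suc by (cases j) (auto simp: algebra_simps)
qed

lemma two_choose_int: "1 \<le> k \<Longrightarrow> 2 * int ((k - 1) choose 2) = (int k - 1) * (int k - 2)"
proof -
  assume k: "1 \<le> k"
  have "2 * ((k - 1) choose 2) = (k - 1) * (k - 1 - 1)" by (rule two_choose)
  then have "int (2 * ((k - 1) choose 2)) = int ((k - 1) * (k - 1 - 1))" by simp
  then show ?thesis using k by (cases "k = 1") (auto simp: of_nat_diff)
qed

lemma pow_nz: "(var_poly v :: 'k::field mpoly) ^ k \<noteq> 0"
  by simp

lemma div_lemma:
  assumes "v \<noteq> w"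
  shows "(var_poly w :: 'k::field mpoly) ^ j * g1 = var_poly v ^ k * g2 \<Longrightarrow> \<exists>r. g1 = var_poly v ^ k * r"
proof (induction k arbitrary: g1 g2)
  case 0 then show ?case by auto
next
  case (Suc k)
  let ?Y = "var_poly v :: 'k mpoly" and ?Z = "var_poly w :: 'k mpoly"
  have "pi v (?Z ^ j * g1) = ?Z ^ j * pi v g1"
    using assms by (simp add: pi_mult pi_power pi_X_other)
  moreover have "pi v (?Z ^ j * g1) = 0"
    using Suc.prems by (simp add: mult.assoc)
  ultimately have "pi v g1 = 0" by simp
  then have g1: "g1 = ?Y * rho v g1" using pi_rho[of g1 v] by simp
  then have "?Y * (?Z ^ j * rho v g1) = ?Y * (?Y ^ k * g2)"
    using Suc.prems by (metis mult.assoc mult.left_commute power_Suc)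
  then have "?Z ^ j * rho v g1 = ?Y ^ k * g2" by simp
  then obtain r where "rho v g1 = ?Y ^ k * r" using Suc.IH by blast
  then show ?case using g1 by (metis mult.assoc power_Suc)
qed

context resid
begin

lemma Q_pi: "q \<in> Q \<Longrightarrow> \<exists>b. pi VX q = p * b"
proof -
  assume "q \<in> Q"
  then obtain a b where "q = x * a + p * b" unfolding Q_def by blast
  then have "pi VX q = p * pi VX b" using pi_S[OF p_S] by (simp add: pi_add pi_mult)
  then show ?thesis by blast
qed

lemma pi_pow_mult: "v \<noteq> VX \<Longrightarrow> pi VX (var_poly v ^ k * f) = var_poly v ^ k * pi VX f"
  by (simp add: pi_mult pi_power pi_X_other)

lemma common_factor:
  fixes c g b1 b2 :: "'k mpoly"
  assumes c: "c \<noteq> 0"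
    and y: "var_poly VY ^ k * g = c * b1" and z: "var_poly VZ ^ k * g = c * b2"
  shows "\<exists>r. g = c * r \<and> b1 = var_poly VY ^ k * r"
proof -
  let ?Y = "var_poly VY :: 'k mpoly" and ?Z = "var_poly VZ :: 'k mpoly"
  have "c * (?Z ^ k * b1) = ?Z ^ k * (c * b1)" by (rule mult.left_commute)
  also have "\<dots> = ?Z ^ k * (?Y ^ k * g)" using y by simp
  also have "\<dots> = ?Y ^ k * (?Z ^ k * g)" by (rule mult.left_commute)
  also have "\<dots> = ?Y ^ k * (c * b2)" using z by simp
  also have "\<dots> = c * (?Y ^ k * b2)" by (rule mult.left_commute)
  finally have "c * (?Z ^ k * b1) = c * (?Y ^ k * b2)" .
  then have "?Z ^ k * b1 = ?Y ^ k * b2" using c by simp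
  then obtain r where r: "b1 = ?Y ^ k * r" using div_lemma[of VY VZ k b1 k b2] by auto
  then have "?Y ^ k * g = ?Y ^ k * (c * r)" using y by (simp add: mult.left_commute)
  then have "g = c * r" by simp
  then show ?thesis using r by blast
qed

lemma J_minus: "a \<in> J \<Longrightarrow> b \<in> J \<Longrightarrow> a - b \<in> J"
proof -
  assume "a \<in> J" "b \<in> J"
  have "(- 1) * b \<in> J" by (rule ideal_mult[OF J_ideal \<open>b \<in> J\<close>]) simp
  then have "a + (- 1) * b \<in> J" using \<open>a \<in> J\<close> J_ideal unfolding is_ideal_in_def by blast
  then show ?thesis by simp
qed

lemma J_saturated: "saturated_in UNIV J"
  unfolding saturated_in_def
proof (intro ballI impI)
  fix f assume "\<exists>k. \<forall>v\<in>UNIV. var_poly v ^ k * f \<in> J"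
  then obtain k where k: "\<And>v. var_poly v ^ k * f \<in> J" by blast
  define g where "g = pi VX f"
  have gv: "\<exists>gv. gv \<in> IZ \<and> var_poly v ^ k * g = p * h * gv" if v: "v \<noteq> VX" for v
  proof -
    have "pi VX (var_poly v ^ k * f) \<in> A" using J_decomp[OF k[of v]] .
    then obtain fa where fa: "fa \<in> IZ" "pi VX (var_poly v ^ k * f) = p * h * fa" unfolding A_def by blast
    then have "var_poly v ^ k * g = p * h * fa" using pi_pow_mult[OF v, of k f] unfolding g_def by simp
    then show ?thesis using fa(1) by blast
  qed
  obtain gY where gY: "gY \<in> IZ" "var_poly VY ^ k * g = p * h * gY" using gv[of VY] by auto
  obtain gZ where gZ: "gZ \<in> IZ" "var_poly VZ ^ k * g = p * h * gZ" using gv[of VZ] by auto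
  obtain r where r: "g = p * h * r" using common_factor[OF _ gY(2) gZ(2)] p_nz h_nz by auto
  define r' where "r' = pi VX r"
  have phS: "p * h \<in> polys S" using polys_mult[OF p_S h_S] .
  have gr': "g = p * h * r'"
  proof -
    have "g = pi VX g" unfolding g_def by (simp add: pi_pi)
    also have "\<dots> = pi VX (p * h) * r'" unfolding r'_def using r by (simp add: pi_mult)
    also have "\<dots> = p * h * r'" using pi_S[OF phS] by simp
    finally show ?thesis .
  qed
  have r'S: "r' \<in> polys S" using pi_polys[of VX r] UNIV_minus_VX unfolding r'_def by simp
  have "\<forall>v\<in>S. var_poly v ^ k * r' \<in> IZ"
  proof
    fix v assume v: "v \<in> S"
    then obtain gv' where gv': "gv' \<in> IZ" "var_poly v ^ k * g = p * h * gv'" using gv[of v] by auto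
    have "p * h * (var_poly v ^ k * r') = p * h * gv'" using gv'(2) gr' by (simp add: algebra_simps)
    then have "var_poly v ^ k * r' = gv'" using p_nz h_nz by simp
    then show "var_poly v ^ k * r' \<in> IZ" using gv'(1) by simp
  qed
  then have "r' \<in> IZ" using IZ_sat r'S unfolding saturated_in_def by blast
  then have "g \<in> {p * h * f | f. f \<in> IZ}" using gr' by blast
  moreover have "g \<in> polys S" using pi_polys[of VX f] UNIV_minus_VX unfolding g_def by simp
  ultimately obtain j r0 where j: "j \<in> J" "j = g + x * r0" using J_res by blast
  define w where "w = rho VX f - r0"
  have fj: "f = j + x * w" using pi_rho[of f VX] j(2) unfolding w_def g_def by (simp add: algebra_simps)
  have wQ: "var_poly v ^ k * w \<in> Q" for v
  proof -
    have "var_poly v ^ k * f - var_poly v ^ k * j \<in> J"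
      using J_minus[OF k[of v] ideal_mult[OF J_ideal j(1), of "var_poly v ^ k"]] by simp
    then have "x * (var_poly v ^ k * w) \<in> J" using fj by (simp add: algebra_simps)
    then show ?thesis using J_col unfolding Q_def by blast
  qed
  obtain b1 where b1: "pi VX (var_poly VY ^ k * w) = p * b1" using Q_pi[OF wQ[of VY]] by blast
  obtain b2 where b2: "pi VX (var_poly VZ ^ k * w) = p * b2" using Q_pi[OF wQ[of VZ]] by blast
  have "var_poly VY ^ k * pi VX w = p * b1" using b1 pi_pow_mult[of VY k w] by simp
  moreover have "var_poly VZ ^ k * pi VX w = p * b2" using b2 pi_pow_mult[of VZ k w] by simp
  ultimately obtain r1 where "pi VX w = p * r1" using common_factor[OF p_nz] by blast
  then have "w = x * rho VX w + p * r1" using pi_rho[of w VX] by (simp add: algebra_simps)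
  then have "w \<in> Q" unfolding Q_def by blast
  then have "x * w \<in> J" using J_col unfolding Q_def by blast
  then show "f \<in> J" using fj j(1) J_ideal unfolding is_ideal_in_def by blast
qed

end

lemma final_arith:
  fixes n a dl e s2 s1 s3 s4 c1 c2 H :: int
  assumes "2*s2 = (n+1)*(n+2)" "2*s1 = n*(n+1)" "2*s3 = (n-a+1)*(n-a+2)" "2*s4 = (n-dl)*(n-dl+1)"
    "H = s2 + s1 - s3 + e - s4" "2*c1 = (a-1)*(a-2)" "2*c2 = (dl-1)*(dl-2)"
  shows "H = (a+dl)*n + 1 - (c1 + c2 + dl - e - 1)"
proof -
  have "2*H = 2*((a+dl)*n + 1 - (c1 + c2 + dl - e - 1))"
    using assms by algebra
  then show ?thesis by simp
qed

context resid
begin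

lemma hilb_formula:
  assumes "\<delta> + dh \<le> Suc (Suc m)" "\<delta> \<le> Suc m"
  shows "int (hilbert_fun UNIV J (Suc (Suc m))) = int (dm (F S (Suc (Suc m)))) + int (dm (F S (Suc m)))
     - int (dm (F S (Suc (Suc m) - (\<delta> + dh)))) + int (hilbert_fun S IZ (Suc (Suc m) - (\<delta> + dh)))
     - int (dm (F S (Suc m - \<delta>)))"
proof -
  have e1: "int (hilbert_fun UNIV J (Suc (Suc m))) = int (dm (F UNIV (Suc (Suc m)))) - int (dm (F UNIV (Suc (Suc m)) \<inter> J))"
    by (rule hilbert_fun_dim[OF J_ideal])
  have e2: "int (dm (F UNIV (Suc (Suc m)))) = int (dm (F S (Suc (Suc m)))) + int (dm (F UNIV (Suc m)))"
    using M8[of "Suc m"] by simp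
  have e3: "int (dm (F UNIV (Suc m))) = int (dm (F S (Suc m))) + int (dm (F UNIV m))"
    using M8[of m] by simp
  note e4 = M3[of "Suc m"]
  note e5 = M45[of m]
  have e6: "dm (F S (Suc m) \<inter> P') = dm (F S (Suc m - \<delta>))" using M6d assms(2) by blast
  have e7: "dm (F S (Suc (Suc m)) \<inter> A) = dm (F S (Suc (Suc m) - (\<delta> + dh)) \<inter> IZ)" using M7d assms(1) by blast
  have e8: "int (hilbert_fun S IZ (Suc (Suc m) - (\<delta> + dh))) = int (dm (F S (Suc (Suc m) - (\<delta> + dh)))) - int (dm (F S (Suc (Suc m) - (\<delta> + dh)) \<inter> IZ))"
    by (rule hilbert_fun_dim[OF IZ_ideal])
  show ?thesis using e1 e2 e3 e4 e5 e6 e7 e8 by linarith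
qed

lemma delta_pos:
  assumes ev: "\<forall>\<^sub>F n in sequentially. hilbert_fun S IZ n = e" and e: "e > 0"
  shows "1 \<le> \<delta>"
proof (rule ccontr)
  assume "\<not> 1 \<le> \<delta>"
  then have "\<delta> = 0" by simp
  then have "p \<in> vs.span {1}" using p_forms forms_0_span by metis
  then obtain c where c: "p = sc c 1" by (auto simp: vs.span_singleton)
  then have pc: "p = const_poly c" by (simp add: sc_def)
  then have "c \<noteq> 0" using p_nz by (auto simp: const_poly_def)
  have all: "F S n \<inter> IZ = F S n" for n
  proof -
    have "f \<in> IZ" if f: "f \<in> F S n" for f
    proof -
      have "(const_poly (inverse c) * f) * p = f"
        using \<open>c \<noteq> 0\<close> pc by (simp add: mult.commute mult.left_commute const_poly_mult const_poly_1)
      moreover have "(const_poly (inverse c) * f) * p \<in> IZ"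
        by (rule ideal_mult[OF IZ_ideal Z_C]) (rule polys_mult[OF const_polys forms_polys[OF f]])
      ultimately show ?thesis by metis
    qed
    then show ?thesis by blast
  qed
  have "hilbert_fun S IZ n = 0" for n
    using hilbert_fun_dim[OF IZ_ideal, of n] all[of n] by simp
  moreover obtain N where "\<forall>n\<ge>N. hilbert_fun S IZ n = e" using ev unfolding eventually_sequentially by blast
  ultimately show False using e by auto
qed

end

theorem lemma3p2:
  fixes IZ J :: "'k::field mpoly set"
    and p h :: "'k mpoly"
    and \<delta> dh d e :: nat
  assumes "alg_closed TYPE('k)"
    \<comment> \<open>Z: nonempty zero-dimensional subscheme of H = Proj S, with saturated ideal IZ in S
        and degree e (constant Hilbert polynomial of S/IZ)\<close>
    and IZ_hom: "homogeneous_ideal_in {VY, VZ, VT} IZ"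
    and IZ_sat: "saturated_in {VY, VZ, VT} IZ"
    and IZ_deg: "\<forall>\<^sub>F n in sequentially. hilbert_fun {VY, VZ, VT} IZ n = e"
    and e_pos: "e > 0"
    \<comment> \<open>p, h nonzero homogeneous in S, deg p = \<delta>, deg h = dh, d = 2\<delta> + dh\<close>
    and p_S: "p \<in> polys {VY, VZ, VT}" and h_S: "h \<in> polys {VY, VZ, VT}"
    and p_nz: "p \<noteq> 0" and h_nz: "h \<noteq> 0"
    and p_hom: "homogeneous_of \<delta> p" and h_hom: "homogeneous_of dh h"
    and d_def: "d = 2 * \<delta> + dh"
    \<comment> \<open>Z \<subset> C' (C' \<subset> P is automatic), i.e. (x,p) \<subseteq> I_Z\<close>
    and Z_C: "p \<in> IZ"
    \<comment> \<open>J homogeneous ideal of R with (J + xR)/xR = ph I_{Z,H} and J : (x) = (x,p)\<close>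
    and J_hom: "homogeneous_ideal_in UNIV J"
    and J_res: "{g \<in> polys {VY, VZ, VT}. \<exists>j\<in>J. \<exists>r. j = g + var_poly VX * r}
                  = {p * h * f | f. f \<in> IZ}"
    and J_col: "{f. var_poly VX * f \<in> J} = {var_poly VX * a + p * b | a b. True}"
  shows "saturated_in UNIV J \<and>
         (\<forall>\<^sub>F n in sequentially. int (hilbert_fun UNIV J n) =
            int d * int n + 1 -
            (int ((d - \<delta> - 1) choose 2) + int ((\<delta> - 1) choose 2) + int \<delta> - int e - 1))"
proof -
  interpret R: resid IZ J p h \<delta> dh
    by unfold_locales (fact IZ_hom IZ_sat p_S h_S p_nz h_nz p_hom h_hom Z_C J_hom J_res J_col)+
  have dpos: "1 \<le> \<delta>" by (rule R.delta_pos[OF IZ_deg e_pos])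
  obtain N where N: "\<And>n. n \<ge> N \<Longrightarrow> hilbert_fun {VY, VZ, VT} IZ n = e"
    using IZ_deg unfolding eventually_sequentially by blast
  have "\<forall>\<^sub>F n in sequentially. int (hilbert_fun UNIV J n) =
            int d * int n + 1 -
            (int ((d - \<delta> - 1) choose 2) + int ((\<delta> - 1) choose 2) + int \<delta> - int e - 1)"
    unfolding eventually_sequentially
  proof (intro exI allI impI)
    fix n assume n: "N + \<delta> + dh + 2 \<le> n"
    define m where "m = n - 2"
    have nm: "n = Suc (Suc m)" using n unfolding m_def by simp
    have a1: "\<delta> + dh \<le> Suc (Suc m)" "\<delta> \<le> Suc m" using n nm by auto
    note H = R.hilb_formula[OF a1]
    have hz: "hilbert_fun {VY, VZ, VT} IZ (Suc (Suc m) - (\<delta> + dh)) = e" using N n nm by simp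
    have D3: "2 * int (vs.dim (forms {VY, VZ, VT} k :: 'k mpoly set)) = (int k + 1) * (int k + 2)" for k
    proof -
      have "int (2 * vs.dim (forms {VY, VZ, VT} k :: 'k mpoly set)) = int ((k + 1) * (k + 2))"
        using dim_forms_3[of k, where 'k='k] by simp
      then show ?thesis by (simp add: algebra_simps)
    qed
    have i1: "int (Suc (Suc m)) = int n" "int (Suc m) = int n - 1"
      "int (Suc (Suc m) - (\<delta> + dh)) = int n - (int \<delta> + int dh)"
      "int (Suc m - \<delta>) = int n - 1 - int \<delta>" using nm a1 by auto
    have c1: "2 * int ((d - \<delta> - 1) choose 2) = (int (\<delta> + dh) - 1) * (int (\<delta> + dh) - 2)"
    proof -
      have "d - \<delta> - 1 = (\<delta> + dh) - 1" using d_def by simp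
      then show ?thesis using two_choose_int[of "\<delta> + dh"] dpos by simp
    qed
    have c2: "2 * int ((\<delta> - 1) choose 2) = (int \<delta> - 1) * (int \<delta> - 2)"
      using two_choose_int[OF dpos] .
    note fa = final_arith[of "int (vs.dim (forms {VY, VZ, VT} (Suc (Suc m)) :: 'k mpoly set))" "int n"
       "int (vs.dim (forms {VY, VZ, VT} (Suc m) :: 'k mpoly set))"
       "int (vs.dim (forms {VY, VZ, VT} (Suc (Suc m) - (\<delta> + dh)) :: 'k mpoly set))" "int (\<delta> + dh)"
       "int (vs.dim (forms {VY, VZ, VT} (Suc m - \<delta>) :: 'k mpoly set))" "int \<delta>"
       "int (hilbert_fun UNIV J n)" "int e" "int ((d - \<delta> - 1) choose 2)" "int ((\<delta> - 1) choose 2)"]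
    have "int (hilbert_fun UNIV J n) = (int (\<delta> + dh) + int \<delta>) * int n + 1 -
            (int ((d - \<delta> - 1) choose 2) + int ((\<delta> - 1) choose 2) + int \<delta> - int e - 1)"
    proof (rule fa)
      show "2 * int (vs.dim (forms {VY, VZ, VT} (Suc (Suc m)) :: 'k mpoly set)) = (int n + 1) * (int n + 2)"
        using D3[of "Suc (Suc m)"] i1 nm by (simp add: algebra_simps)
      show "2 * int (vs.dim (forms {VY, VZ, VT} (Suc m) :: 'k mpoly set)) = int n * (int n + 1)"
        using D3[of "Suc m"] i1 nm by (simp add: algebra_simps)
      show "2 * int (vs.dim (forms {VY, VZ, VT} (Suc (Suc m) - (\<delta> + dh)) :: 'k mpoly set)) =
          (int n - int (\<delta> + dh) + 1) * (int n - int (\<delta> + dh) + 2)"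
        using D3[of "Suc (Suc m) - (\<delta> + dh)"] i1(3) by simp
      show "2 * int (vs.dim (forms {VY, VZ, VT} (Suc m - \<delta>) :: 'k mpoly set)) = (int n - int \<delta>) * (int n - int \<delta> + 1)"
        using D3[of "Suc m - \<delta>"] i1(4) by (simp add: algebra_simps)
      show "int (hilbert_fun UNIV J n) = int (vs.dim (forms {VY, VZ, VT} (Suc (Suc m)) :: 'k mpoly set)) +
          int (vs.dim (forms {VY, VZ, VT} (Suc m) :: 'k mpoly set)) -
          int (vs.dim (forms {VY, VZ, VT} (Suc (Suc m) - (\<delta> + dh)) :: 'k mpoly set)) + int e -
          int (vs.dim (forms {VY, VZ, VT} (Suc m - \<delta>) :: 'k mpoly set))"
        using H hz nm by simp
      show "2 * int ((d - \<delta> - 1) choose 2) = (int (\<delta> + dh) - 1) * (int (\<delta> + dh) - 2)" by (rule c1)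
      show "2 * int ((\<delta> - 1) choose 2) = (int \<delta> - 1) * (int \<delta> - 2)" by (rule c2)
    qed
    then show "int (hilbert_fun UNIV J n) = int d * int n + 1 -
            (int ((d - \<delta> - 1) choose 2) + int ((\<delta> - 1) choose 2) + int \<delta> - int e - 1)"
      using d_def by simp
  qed
  then show ?thesis using R.J_saturated by blast
qed

end
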